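(* For every partition $\lambda$, $\tau_{p_\lambda}(x)=x^{\ell(\lambda)}(x-1)^{|\lambda|-\ell(\lambda)}$.
   Context: $p_\lambda=p_{\lambda_1}\cdots p_{\lambda_{\ell(\lambda)}}$ with $p_n=\sum_i x_i^n$ (power-sum symmetric functions); $|\lambda|$ is the size and $\ell(\lambda)$ the number of parts of $\lambda$. $P_\lambda$ is the disjoint union of paths with $\lambda_1,\dots,\lambda_{\ell(\lambda)}$ vertices, $X_G$ the chromatic symmetric function, and $\{X_{P_\lambda}\}$ is a basis of the symmetric functions over $\mathbb{Q}$. For $f=\sum_\lambda a_\lambda X_{P_\lambda}$, $\tau_f(x)=\sum_\lambda a_\lambda x^{\ell(\lambda)}$. *)

theory Defs
  imports "HOL-Library.Poly_Mapping" "HOL-Library.FuncSet"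
          "HOL-Computational_Algebra.Polynomial"
begin

text \<open>Monomials in the countably many variables x_0, x_1, ... are exponent vectors
  (finitely supported maps nat to nat).  A (formal) symmetric function over Q is
  represented by its coefficient function on monomials.\<close>

type_synonym monomial = "nat \<Rightarrow>\<^sub>0 nat"
type_synonym series = "monomial \<Rightarrow> rat"

definition series_one :: series where
  "series_one \<alpha> = (if \<alpha> = 0 then 1 else 0)"

definition series_mult :: "series \<Rightarrow> series \<Rightarrow> series" where
  "series_mult f g \<alpha> = (\<Sum>(\<beta>, \<gamma>) \<in> {(\<beta>, \<gamma>). \<beta> + \<gamma> = \<alpha>}. f \<beta> * g \<gamma>)"

text \<open>Power sum p_n = sum_i x_i^n  (n \<ge> 1).\<close>
definition power_sum :: "nat \<Rightarrow> series" where
  "power_sum n \<alpha> = (if \<exists>i. \<alpha> = Poly_Mapping.single i n then 1 else 0)"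

definition is_partition :: "nat list \<Rightarrow> bool" where
  "is_partition lam \<longleftrightarrow> sorted_wrt (\<ge>) lam \<and> (\<forall>k \<in> set lam. 0 < k)"

definition power_sum_part :: "nat list \<Rightarrow> series" where
  "power_sum_part lam = foldr (\<lambda>n acc. series_mult (power_sum n) acc) lam series_one"

text \<open>Chromatic symmetric function of a finite simple graph (V, E):
  X_G = sum over proper colourings kappa : V \<rightarrow> colours of prod_v x_{kappa v}.\<close>
definition chromatic :: "'v set \<Rightarrow> ('v \<Rightarrow> 'v \<Rightarrow> bool) \<Rightarrow> series" where
  "chromatic V E \<alpha> = of_nat (card {\<kappa> \<in> V \<rightarrow>\<^sub>E (UNIV :: nat set).
       (\<forall>u\<in>V. \<forall>v\<in>V. E u v \<longrightarrow> \<kappa> u \<noteq> \<kappa> v) \<and>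
       (\<forall>i. card {v \<in> V. \<kappa> v = i} = Poly_Mapping.lookup \<alpha> i)})"

text \<open>The path forest P_lambda: component j is a path on lambda_j vertices
  (j, 0) - (j, 1) - ... - (j, lambda_j - 1).\<close>
definition path_forest_V :: "nat list \<Rightarrow> (nat \<times> nat) set" where
  "path_forest_V lam = {(j, k). j < length lam \<and> k < lam ! j}"

definition path_forest_E :: "nat list \<Rightarrow> nat \<times> nat \<Rightarrow> nat \<times> nat \<Rightarrow> bool" where
  "path_forest_E lam u v \<longleftrightarrow> fst u = fst v \<and> (snd v = snd u + 1 \<or> snd u = snd v + 1)"

definition X_path :: "nat list \<Rightarrow> series" where
  "X_path lam = chromatic (path_forest_V lam) (path_forest_E lam)"

definition is_path_expansion :: "(nat list \<Rightarrow> rat) \<Rightarrow> series \<Rightarrow> bool" where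
  "is_path_expansion a f \<longleftrightarrow>
     finite {\<mu>. a \<mu> \<noteq> 0} \<and> (\<forall>\<mu>. a \<mu> \<noteq> 0 \<longrightarrow> is_partition \<mu>) \<and>
     (\<forall>\<alpha>. f \<alpha> = (\<Sum>\<mu> \<in> {\<mu>. a \<mu> \<noteq> 0}. a \<mu> * X_path \<mu> \<alpha>))"

definition tau :: "(nat list \<Rightarrow> rat) \<Rightarrow> rat poly" where
  "tau a = (\<Sum>\<mu> \<in> {\<mu>. a \<mu> \<noteq> 0}. monom (a \<mu>) (length \<mu>))"

end

theory Submission
  imports Defs "HOL-Combinatorics.Permutations"
begin


definition counts :: "'v set \<Rightarrow> ('v \<Rightarrow> nat) \<Rightarrow> monomial \<Rightarrow> bool" where
  "counts V \<kappa> \<alpha> \<longleftrightarrow> (\<forall>i. card {v\<in>V. \<kappa> v = i} = Poly_Mapping.lookup \<alpha> i)"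

definition gset :: "'v set \<Rightarrow> ('v\<times>'v) set \<Rightarrow> ('v\<times>'v) set \<Rightarrow> monomial \<Rightarrow> ('v \<Rightarrow> nat) set" where
  "gset V P Q \<alpha> = {\<kappa> \<in> V \<rightarrow>\<^sub>E UNIV. (\<forall>(u,w)\<in>P. \<kappa> u \<noteq> \<kappa> w) \<and> (\<forall>(u,w)\<in>Q. \<kappa> u = \<kappa> w) \<and> counts V \<kappa> \<alpha>}"

definition gcnt where "gcnt V P Q \<alpha> = card (gset V P Q \<alpha>)"

lemma counts_keys:
  assumes "finite V" "counts V \<kappa> \<alpha>" "v \<in> V"
  shows "\<kappa> v \<in> Poly_Mapping.keys \<alpha>"
proof -
  have "card {w\<in>V. \<kappa> w = \<kappa> v} \<noteq> 0" using assms(1,3)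
    by (subst card_0_eq) auto
  then show ?thesis using assms(2) unfolding counts_def by (simp add: in_keys_iff)
qed

lemma finite_counts_set:
  assumes "finite V"
  shows "finite {\<kappa> \<in> V \<rightarrow>\<^sub>E UNIV. counts V \<kappa> \<alpha>}"
proof (rule finite_subset)
  show "{\<kappa> \<in> V \<rightarrow>\<^sub>E UNIV. counts V \<kappa> \<alpha>} \<subseteq> V \<rightarrow>\<^sub>E Poly_Mapping.keys \<alpha>"
    using counts_keys[OF assms] by (auto simp: PiE_def Pi_def)
  show "finite (V \<rightarrow>\<^sub>E Poly_Mapping.keys \<alpha>)" using assms by (simp add: finite_PiE)
qed

lemma finite_gset: "finite V \<Longrightarrow> finite (gset V P Q \<alpha>)"
  by (rule finite_subset[OF _ finite_counts_set]) (auto simp: gset_def)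

lemma gcnt_split:
  assumes "finite V"
  shows "gcnt V P Q \<alpha> = gcnt V (insert e P) Q \<alpha> + gcnt V P (insert e Q) \<alpha>"
proof -
  have "gset V P Q \<alpha> = gset V (insert e P) Q \<alpha> \<union> gset V P (insert e Q) \<alpha>"
    by (cases e) (auto simp: gset_def)
  moreover have "gset V (insert e P) Q \<alpha> \<inter> gset V P (insert e Q) \<alpha> = {}"
    by (cases e) (auto simp: gset_def)
  ultimately show ?thesis unfolding gcnt_def
    by (simp add: card_Un_disjoint finite_gset assms)
qed

lemma gcnt_iso:
  assumes fin: "finite V" and bij: "bij_betw \<phi> V V'"
    and PV: "P \<subseteq> V \<times> V" and QV: "Q \<subseteq> V \<times> V"
  shows "gcnt V' (map_prod \<phi> \<phi> ` P) (map_prod \<phi> \<phi> ` Q) \<alpha> = gcnt V P Q \<alpha>"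
proof -
  define G where "G = (\<lambda>\<kappa>' :: _ \<Rightarrow> nat. restrict (\<kappa>' \<circ> \<phi>) V)"
  have inj: "inj_on \<phi> V" and im: "\<phi> ` V = V'" using bij by (auto simp: bij_betw_def)
  have cnt: "card {v\<in>V'. \<kappa>' v = i} = card {v\<in>V. \<kappa>' (\<phi> v) = i}" for \<kappa>' :: "_ \<Rightarrow> nat" and i
  proof -
    have "{v\<in>V'. \<kappa>' v = i} = \<phi> ` {v\<in>V. \<kappa>' (\<phi> v) = i}" using im by auto
    then show ?thesis by (simp add: card_image inj_on_subset[OF inj])
  qed
  have "bij_betw G (gset V' (map_prod \<phi> \<phi> ` P) (map_prod \<phi> \<phi> ` Q) \<alpha>) (gset V P Q \<alpha>)"
  proof (rule bij_betw_imageI)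
    show "inj_on G (gset V' (map_prod \<phi> \<phi> ` P) (map_prod \<phi> \<phi> ` Q) \<alpha>)"
    proof (rule inj_onI)
      fix a b assume a: "a \<in> gset V' (map_prod \<phi> \<phi> ` P) (map_prod \<phi> \<phi> ` Q) \<alpha>"
        and b: "b \<in> gset V' (map_prod \<phi> \<phi> ` P) (map_prod \<phi> \<phi> ` Q) \<alpha>" and e: "G a = G b"
      show "a = b"
      proof (rule extensionalityI[of _ V'])
        show "a \<in> extensional V'" "b \<in> extensional V'" using a b by (auto simp: gset_def PiE_def)
        fix x assume "x \<in> V'"
        then obtain y where "y \<in> V" "x = \<phi> y" using im by auto
        then show "a x = b x" using fun_cong[OF e, of y] by (simp add: G_def)
      qed
    qed
    show "G ` gset V' (map_prod \<phi> \<phi> ` P) (map_prod \<phi> \<phi> ` Q) \<alpha> = gset V P Q \<alpha>"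
    proof
      show "G ` gset V' (map_prod \<phi> \<phi> ` P) (map_prod \<phi> \<phi> ` Q) \<alpha> \<subseteq> gset V P Q \<alpha>"
      proof
        fix x assume "x \<in> G ` gset V' (map_prod \<phi> \<phi> ` P) (map_prod \<phi> \<phi> ` Q) \<alpha>"
        then obtain a where a: "a \<in> gset V' (map_prod \<phi> \<phi> ` P) (map_prod \<phi> \<phi> ` Q) \<alpha>" and x: "x = G a" by auto
        have "counts V x \<alpha>"
        proof -
          have "{v\<in>V. x v = i} = {v\<in>V. a (\<phi> v) = i}" for i by (auto simp: x G_def)
          then show ?thesis using a cnt by (auto simp: gset_def counts_def)
        qed
        moreover have "(\<forall>(u,w)\<in>P. x u \<noteq> x w)"
        proof (clarify)
          fix u w assume uw: "(u,w) \<in> P" "x u = x w"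
          then have "u \<in> V" "w \<in> V" using PV by auto
          moreover have "a (\<phi> u) \<noteq> a (\<phi> w)" using a uw(1) by (force simp: gset_def)
          ultimately show False using uw(2) by (simp add: x G_def)
        qed
        moreover have "(\<forall>(u,w)\<in>Q. x u = x w)"
        proof (clarify)
          fix u w assume uw: "(u,w) \<in> Q"
          then have "u \<in> V" "w \<in> V" using QV by auto
          moreover have "a (\<phi> u) = a (\<phi> w)" using a uw(1) by (force simp: gset_def)
          ultimately show "x u = x w" by (simp add: x G_def)
        qed
        ultimately show "x \<in> gset V P Q \<alpha>" by (auto simp: gset_def x G_def)
      qed
    next
      show "gset V P Q \<alpha> \<subseteq> G ` gset V' (map_prod \<phi> \<phi> ` P) (map_prod \<phi> \<phi> ` Q) \<alpha>"
      proof
        fix \<kappa> assume k: "\<kappa> \<in> gset V P Q \<alpha>"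
        define \<kappa>' where "\<kappa>' = restrict (\<kappa> \<circ> inv_into V \<phi>) V'"
        have k1: "\<kappa>' (\<phi> v) = \<kappa> v" if "v \<in> V" for v
          using that inj im by (auto simp: \<kappa>'_def)
        have "G \<kappa>' = \<kappa>"
          using k k1 by (auto simp: G_def gset_def PiE_def extensional_def)
        moreover have "\<kappa>' \<in> gset V' (map_prod \<phi> \<phi> ` P) (map_prod \<phi> \<phi> ` Q) \<alpha>"
        proof -
          have "{v\<in>V. \<kappa>' (\<phi> v) = i} = {v\<in>V. \<kappa> v = i}" for i using k1 by auto
          then have "counts V' \<kappa>' \<alpha>" using k cnt by (auto simp: gset_def counts_def)
          moreover have "(\<forall>(u,w)\<in>map_prod \<phi> \<phi> ` P. \<kappa>' u \<noteq> \<kappa>' w)"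
          proof (clarify)
            fix u w assume uw: "(u,w) \<in> P" "\<kappa>' (\<phi> u) = \<kappa>' (\<phi> w)"
            then have "u \<in> V" "w \<in> V" using PV by auto
            moreover have "\<kappa> u \<noteq> \<kappa> w" using k uw by (force simp: gset_def)
            ultimately show False using uw(2) by (simp add: k1)
          qed
          moreover have "(\<forall>(u,w)\<in>map_prod \<phi> \<phi> ` Q. \<kappa>' u = \<kappa>' w)"
          proof (clarify)
            fix u w assume uw: "(u,w) \<in> Q"
            then have "u \<in> V" "w \<in> V" using QV by auto
            moreover have "\<kappa> u = \<kappa> w" using k uw by (force simp: gset_def)
            ultimately show "\<kappa>' (\<phi> u) = \<kappa>' (\<phi> w)" by (simp add: k1)
          qed
          ultimately show ?thesis by (auto simp: gset_def \<kappa>'_def)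
        qed
        ultimately show "\<kappa> \<in> G ` gset V' (map_prod \<phi> \<phi> ` P) (map_prod \<phi> \<phi> ` Q) \<alpha>" by blast
      qed
    qed
  qed
  then show ?thesis unfolding gcnt_def by (rule bij_betw_same_card)
qed



definition Ed :: "nat list \<Rightarrow> ((nat\<times>nat)\<times>(nat\<times>nat)) set" where
  "Ed lam = {((j,k),(j,Suc k)) | j k. j < length lam \<and> Suc k < lam!j}"

lemma pfV_iff[simp]: "(a,b) \<in> path_forest_V lam \<longleftrightarrow> a < length lam \<and> b < lam!a"
  by (simp add: path_forest_V_def)

lemma finite_pfV[simp]: "finite (path_forest_V lam)"
proof (rule finite_subset)
  show "path_forest_V lam \<subseteq> {..<length lam} \<times> {..<sum_list lam}"
    using elem_le_sum_list by (fastforce simp: path_forest_V_def)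
qed auto

lemma card_pfV: "card (path_forest_V lam) = sum_list lam"
proof -
  have "path_forest_V lam = (\<Union>j\<in>{..<length lam}. {j} \<times> {..<lam!j})" by auto
  then have "card (path_forest_V lam) = (\<Sum>j\<in>{..<length lam}. card ({j} \<times> {..<lam!j}))"
    by (simp only:) (rule card_UN_disjoint, auto)
  also have "\<dots> = (\<Sum>j\<in>{..<length lam}. lam!j)" by (simp add: card_cartesian_product)
  also have "\<dots> = sum_list lam" by (simp add: sum_list_sum_nth atLeast0LessThan)
  finally show ?thesis .
qed

lemma X_path_gcnt: "X_path lam \<alpha> = of_nat (gcnt (path_forest_V lam) (Ed lam) {} \<alpha>)"
proof -
  have "{\<kappa> \<in> path_forest_V lam \<rightarrow>\<^sub>E (UNIV :: nat set).
       (\<forall>u\<in>path_forest_V lam. \<forall>v\<in>path_forest_V lam. path_forest_E lam u v \<longrightarrow> \<kappa> u \<noteq> \<kappa> v) \<and>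
       (\<forall>i. card {v \<in> path_forest_V lam. \<kappa> v = i} = Poly_Mapping.lookup \<alpha> i)}
     = gset (path_forest_V lam) (Ed lam) {} \<alpha>"
    unfolding gset_def counts_def Ed_def path_forest_E_def
    apply (rule Collect_cong)
    apply safe
       apply force
      apply (auto simp: Suc_less_eq2)
    apply metis+
    done
  then show ?thesis by (simp add: X_path_def chromatic_def gcnt_def)
qed



definition sz :: "bool list list \<Rightarrow> nat list" where
  "sz cs = map (\<lambda>l. Suc (length l)) cs"

abbreviation VV where "VV cs \<equiv> path_forest_V (sz cs)"

definition EL :: "bool \<Rightarrow> bool list list \<Rightarrow> ((nat\<times>nat)\<times>(nat\<times>nat)) set" where
  "EL b cs = {((j,k),(j,Suc k)) | j k. j < length cs \<and> k < length (cs!j) \<and> cs!j!k = b}"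

definition cntF where "cntF cs \<alpha> = gcnt (VV cs) (EL False cs) (EL True cs) \<alpha>"

lemma sz_len[simp]: "length (sz cs) = length cs" by (simp add: sz_def)
lemma sz_nth[simp]: "i < length cs \<Longrightarrow> sz cs ! i = Suc (length (cs!i))" by (simp add: sz_def)

lemma VV_iff[simp]: "(a,b) \<in> VV cs \<longleftrightarrow> a < length cs \<and> b \<le> length (cs!a)"
  by (auto simp: sz_def)

lemma EL_sub: "EL b cs \<subseteq> VV cs \<times> VV cs"
  by (auto simp: EL_def)

lemma finite_EL: "finite (EL b cs)"
  using EL_sub by (rule finite_subset) simp

lemma sz_update_same: "length l = length (cs!j) \<Longrightarrow> sz (cs[j := l]) = sz cs"
  by (simp add: sz_def map_update list_update_id[symmetric] del: list_update_id)
    (metis list_update_id map_update)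

locale splitloc =
  fixes cs :: "bool list list" and j k :: nat
  assumes j: "j < length cs" and k: "k < length (cs!j)" and lab: "cs!j!k"
begin

definition c where "c = cs!j"
definition cs1 where "cs1 = cs[j := take k c] @ [drop (Suc k) c]"
definition cs2 where "cs2 = cs[j := c[k := False]]"
definition \<phi> where "\<phi> = (\<lambda>(a,b). if a = j \<and> k < b then (length cs, b - Suc k) else (a,b))"
definition e where "e = ((j,k),(j,Suc k))"

lemma len1[simp]: "length cs1 = Suc (length cs)" by (simp add: cs1_def)
lemma nth1: "cs1 ! a = (if a < length cs then (if a = j then take k c else cs!a) else drop (Suc k) c)"
  if "a < Suc (length cs)" using that j by (auto simp: cs1_def nth_append)

lemma kc: "k < length c" "c!k" using k lab by (auto simp: c_def)

lemma bij: "bij_betw \<phi> (VV cs) (VV cs1)"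
proof (rule bij_betw_imageI)
  show "inj_on \<phi> (VV cs)"
    by (rule inj_onI) (auto simp: \<phi>_def split: if_splits)
  show "\<phi> ` VV cs = VV cs1"
  proof
    show "\<phi> ` VV cs \<subseteq> VV cs1"
      using kc j by (auto simp: \<phi>_def nth1 c_def)
    show "VV cs1 \<subseteq> \<phi> ` VV cs"
    proof
      fix x assume x: "x \<in> VV cs1"
      obtain a b where ab: "x = (a,b)" by (cases x)
      show "x \<in> \<phi> ` VV cs"
      proof (cases "a < length cs")
        case True
        then have "(a,b) \<in> VV cs" "\<phi> (a,b) = (a,b)"
          using x kc j by (auto simp: ab nth1 c_def \<phi>_def split: if_splits)
        then show ?thesis using ab by (metis image_eqI)
      next
        case False
        then have "a = length cs" using x ab by simp
        then have "(j, b + Suc k) \<in> VV cs" "\<phi> (j, b + Suc k) = (a,b)"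
          using x kc j by (auto simp: ab nth1 c_def \<phi>_def)
        then show ?thesis using ab by (metis image_eqI)
      qed
    qed
  qed
qed

lemma edges: "map_prod \<phi> \<phi> ` (EL b cs - {e}) = EL b cs1"
proof
  show "map_prod \<phi> \<phi> ` (EL b cs - {e}) \<subseteq> EL b cs1"
  proof
    fix y assume "y \<in> map_prod \<phi> \<phi> ` (EL b cs - {e})"
    then obtain a m where y: "y = map_prod \<phi> \<phi> ((a,m),(a,Suc m))" and a: "a < length cs"
      and m: "m < length (cs!a)" and lb: "cs!a!m = b" and ne: "((a,m),(a,Suc m)) \<noteq> e"
      by (auto simp: EL_def)
    consider "a \<noteq> j" | "a = j" "m < k" | "a = j" "k < m" using ne unfolding e_def by fastforce
    then show "y \<in> EL b cs1"
    proof cases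
      case 1 then show ?thesis using y a m lb by (auto simp: \<phi>_def EL_def nth1)
    next
      case 2 then show ?thesis using y a m lb kc by (auto simp: \<phi>_def EL_def nth1 c_def)
    next
      case 3
      then have "y = ((length cs, m - Suc k), (length cs, Suc (m - Suc k)))"
        using y by (auto simp: \<phi>_def)
      moreover have "m - Suc k < length (drop (Suc k) c)" "drop (Suc k) c ! (m - Suc k) = b"
        using 3 m lb by (auto simp: c_def)
      ultimately show ?thesis by (auto simp: EL_def nth1)
    qed
  qed
  show "EL b cs1 \<subseteq> map_prod \<phi> \<phi> ` (EL b cs - {e})"
  proof
    fix y assume "y \<in> EL b cs1"
    then obtain a m where y: "y = ((a,m),(a,Suc m))" and a: "a < Suc (length cs)"
      and m: "m < length (cs1!a)" and lb: "cs1!a!m = b"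
      by (auto simp: EL_def)
    show "y \<in> map_prod \<phi> \<phi> ` (EL b cs - {e})"
    proof (cases "a < length cs")
      case True
      then have "y \<in> EL b cs - {e}" "map_prod \<phi> \<phi> y = y"
        using y m lb kc by (auto simp: EL_def nth1 c_def e_def \<phi>_def split: if_splits)
      then show ?thesis by (metis image_eqI)
    next
      case False
      then have aL: "a = length cs" using a by simp
      let ?z = "((j, m + Suc k), (j, Suc (m + Suc k)))"
      have "?z \<in> EL b cs - {e}" using m lb aL kc j by (auto simp: EL_def nth1 c_def e_def add.commute)
      moreover have "map_prod \<phi> \<phi> ?z = y" using y aL by (auto simp: \<phi>_def)
      ultimately show ?thesis by (metis image_eqI)
    qed
  qed
qed

lemma eT: "e \<in> EL True cs" using j k lab by (auto simp: EL_def e_def)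

lemma EL_False_e: "EL False cs - {e} = EL False cs" using lab by (auto simp: EL_def e_def)

lemma sz2: "sz cs2 = sz cs" by (simp add: cs2_def c_def sz_update_same)
lemma EL2b: "EL b cs2 = (if b then EL True cs - {e} else insert e (EL False cs))"
proof -
  have "((a,m),(a',m')) \<in> EL b cs2 \<longleftrightarrow> ((a,m),(a',m')) \<in> (if b then EL True cs - {e} else insert e (EL False cs))"
    for a m a' m'
  proof (cases "a = j \<and> m = k")
    case True
    then show ?thesis using j k lab by (auto simp: EL_def cs2_def c_def e_def)
  next
    case False
    then have "a < length cs \<Longrightarrow> m < length (cs!a) \<Longrightarrow> cs2 ! a ! m = cs ! a ! m"
      by (cases "a = j") (auto simp: cs2_def c_def)
    moreover have "length cs2 = length cs" "a < length cs \<Longrightarrow> length (cs2!a) = length (cs!a)"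
      by (cases "a = j"; auto simp: cs2_def c_def)+
    ultimately show ?thesis using False by (auto simp: EL_def e_def)
  qed
  note * = this
  show ?thesis
  proof (intro set_eqI)
    fix x :: "(nat\<times>nat)\<times>(nat\<times>nat)"
    obtain a m a' m' where "x = ((a,m),(a',m'))" by (metis prod.collapse)
    then show "x \<in> EL b cs2 \<longleftrightarrow> x \<in> (if b then EL True cs - {e} else insert e (EL False cs))"
      using * by simp
  qed
qed

lemma EL2: "EL False cs2 = insert e (EL False cs)" "EL True cs2 = EL True cs - {e}"
  using EL2b[of False] EL2b[of True] by auto

lemma card1: "card (EL True cs1) < card (EL True cs)"
proof -
  have "inj_on (map_prod \<phi> \<phi>) (EL True cs - {e})"
  proof -
    have "inj_on (map_prod \<phi> \<phi>) (VV cs \<times> VV cs)"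
      using bij by (auto simp: bij_betw_def intro: map_prod_inj_on)
    then show ?thesis by (rule inj_on_subset) (use EL_sub in auto)
  qed
  then have "card (EL True cs1) = card (EL True cs - {e})"
    using edges[of True] by (metis card_image)
  also have "\<dots> < card (EL True cs)" using card_Diff1_less[OF finite_EL eT] .
  finally show ?thesis .
qed

lemma card2: "card (EL True cs2) < card (EL True cs)"
  using EL2 card_Diff1_less[OF finite_EL eT] by simp

lemma cnt_rec: "int (cntF cs \<alpha>) = int (cntF cs1 \<alpha>) - int (cntF cs2 \<alpha>)"
proof -
  have "cntF cs1 \<alpha> = gcnt (VV cs) (EL False cs) (EL True cs - {e}) \<alpha>"
    unfolding cntF_def
    using gcnt_iso[OF finite_pfV bij, of "EL False cs" "EL True cs - {e}" \<alpha>] EL_sub edges[of False] edges[of True]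
      EL_False_e by auto
  also have "\<dots> = gcnt (VV cs) (insert e (EL False cs)) (EL True cs - {e}) \<alpha> +
       gcnt (VV cs) (EL False cs) (insert e (EL True cs - {e})) \<alpha>"
    by (rule gcnt_split) simp
  also have "\<dots> = cntF cs2 \<alpha> + cntF cs \<alpha>"
    using eT by (simp add: cntF_def sz2 EL2 insert_absorb)
  finally show ?thesis by simp
qed

end



definition SP :: "series \<Rightarrow> bool" where "SP f \<longleftrightarrow> (\<exists>a. is_path_expansion a f)"

lemma SP_diff:
  assumes "SP f" "SP g" shows "SP (\<lambda>\<alpha>. f \<alpha> - g \<alpha>)"
proof -
  obtain a b where a: "is_path_expansion a f" and b: "is_path_expansion b g" using assms by (auto simp: SP_def)
  define c where "c = (\<lambda>\<mu>. a \<mu> - b \<mu>)"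
  let ?A = "{\<mu>. a \<mu> \<noteq> 0}" and ?B = "{\<mu>. b \<mu> \<noteq> 0}" and ?C = "{\<mu>. c \<mu> \<noteq> 0}"
  have fA: "finite ?A" and fB: "finite ?B" using a b by (auto simp: is_path_expansion_def)
  have CS: "?C \<subseteq> ?A \<union> ?B" by (auto simp: c_def)
  have "is_path_expansion c (\<lambda>\<alpha>. f \<alpha> - g \<alpha>)"
    unfolding is_path_expansion_def
  proof (intro conjI allI impI)
    show "finite ?C" using CS fA fB by (meson finite_UnI finite_subset)
    show "is_partition \<mu>" if "c \<mu> \<noteq> 0" for \<mu>
    proof -
      have "a \<mu> \<noteq> 0 \<or> b \<mu> \<noteq> 0" using that by (auto simp: c_def)
      then show ?thesis using a b by (auto simp: is_path_expansion_def)
    qed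
    fix \<alpha>
    have "f \<alpha> = (\<Sum>\<mu>\<in>?A \<union> ?B. a \<mu> * X_path \<mu> \<alpha>)"
      using a fA fB unfolding is_path_expansion_def by (auto intro!: sum.mono_neutral_left)
    moreover have "g \<alpha> = (\<Sum>\<mu>\<in>?A \<union> ?B. b \<mu> * X_path \<mu> \<alpha>)"
      using b fA fB unfolding is_path_expansion_def by (auto intro!: sum.mono_neutral_left)
    moreover have "(\<Sum>\<mu>\<in>?C. c \<mu> * X_path \<mu> \<alpha>) = (\<Sum>\<mu>\<in>?A \<union> ?B. c \<mu> * X_path \<mu> \<alpha>)"
      using CS fA fB by (auto intro!: sum.mono_neutral_left)
    ultimately show "f \<alpha> - g \<alpha> = (\<Sum>\<mu>\<in>?C. c \<mu> * X_path \<mu> \<alpha>)"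
      by (simp add: c_def sum_subtractf left_diff_distrib)
  qed
  then show ?thesis by (auto simp: SP_def)
qed

lemma X_path_perm:
  assumes "p permutes {..<length \<mu>}"
  shows "X_path (permute_list p \<mu>) = X_path \<mu>"
proof
  fix \<alpha>
  define \<nu> where "\<nu> = permute_list p \<mu>"
  define \<phi> where "\<phi> = (\<lambda>(i::nat,k::nat). (p i, k))"
  have phi: "\<phi> (i,k) = (p i, k)" for i k by (simp add: \<phi>_def)
  have pi: "i < length \<mu> \<Longrightarrow> p i < length \<mu>" for i using permutes_in_image[OF assms, of i] by simp
  have lnu: "length \<nu> = length \<mu>" by (simp add: \<nu>_def)
  have nth: "i < length \<mu> \<Longrightarrow> \<nu> ! i = \<mu> ! p i" for i using assms by (simp add: \<nu>_def permute_list_nth)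
  have ip: "inv p i < length \<mu>" "p (inv p i) = i" if "i < length \<mu>" for i
    using permutes_in_image[OF permutes_inv[OF assms], of i] that permutes_inverses(1)[OF assms] by auto
  have injp: "p i = p i' \<Longrightarrow> i = i'" for i i' using permutes_inj[OF assms] by (simp add: inj_eq)
  have bij: "bij_betw \<phi> (path_forest_V \<nu>) (path_forest_V \<mu>)"
  proof (rule bij_betw_imageI)
    show "inj_on \<phi> (path_forest_V \<nu>)"
    proof (rule inj_onI)
      fix x y assume "\<phi> x = \<phi> y"
      then show "x = y" using injp by (cases x; cases y) (simp add: phi)
    qed
    show "\<phi> ` path_forest_V \<nu> = path_forest_V \<mu>"
    proof
      show "\<phi> ` path_forest_V \<nu> \<subseteq> path_forest_V \<mu>"
      proof
        fix y assume "y \<in> \<phi> ` path_forest_V \<nu>"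
        then obtain i k where "y = (p i, k)" "i < length \<mu>" "k < \<nu> ! i" using lnu by (auto simp: phi)
        then show "y \<in> path_forest_V \<mu>" using pi nth by simp
      qed
      show "path_forest_V \<mu> \<subseteq> \<phi> ` path_forest_V \<nu>"
      proof
        fix x assume x: "x \<in> path_forest_V \<mu>"
        obtain i k where ik: "x = (i,k)" by (cases x)
        have "(inv p i, k) \<in> path_forest_V \<nu>" "\<phi> (inv p i, k) = x"
          using x ik nth ip[of i] lnu by (simp_all add: phi)
        then show "x \<in> \<phi> ` path_forest_V \<nu>" by (metis image_eqI)
      qed
    qed
  qed
  have sub: "Ed \<nu> \<subseteq> path_forest_V \<nu> \<times> path_forest_V \<nu>" by (auto simp: Ed_def)
  have ed: "map_prod \<phi> \<phi> ` Ed \<nu> = Ed \<mu>"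
  proof
    show "map_prod \<phi> \<phi> ` Ed \<nu> \<subseteq> Ed \<mu>"
    proof
      fix y assume "y \<in> map_prod \<phi> \<phi> ` Ed \<nu>"
      then obtain i k where "y = ((p i, k), (p i, Suc k))" "i < length \<mu>" "Suc k < \<nu> ! i"
        using lnu by (auto simp: phi Ed_def)
      then show "y \<in> Ed \<mu>" using pi nth by (auto simp: Ed_def)
    qed
    show "Ed \<mu> \<subseteq> map_prod \<phi> \<phi> ` Ed \<nu>"
    proof
      fix x assume "x \<in> Ed \<mu>"
      then obtain i k where x: "x = ((i,k),(i,Suc k))" "i < length \<mu>" "Suc k < \<mu>!i" by (auto simp: Ed_def)
      have "((inv p i, k),(inv p i, Suc k)) \<in> Ed \<nu>"
        using x nth ip[of i] lnu by (auto simp: Ed_def)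
      moreover have "map_prod \<phi> \<phi> ((inv p i, k),(inv p i, Suc k)) = x"
        using x ip[of i] by (simp add: phi)
      ultimately show "x \<in> map_prod \<phi> \<phi> ` Ed \<nu>" by (metis image_eqI)
    qed
  qed
  show "X_path \<nu> \<alpha> = X_path \<mu> \<alpha>"
    using gcnt_iso[OF finite_pfV bij sub, of "{}" \<alpha>] ed by (simp add: X_path_gcnt)
qed

lemma SP_X:
  assumes pos: "\<forall>x\<in>set \<mu>. 0 < x" shows "SP (X_path \<mu>)"
proof -
  define \<nu> where "\<nu> = rev (sort \<mu>)"
  have "mset \<nu> = mset \<mu>" by (simp add: \<nu>_def)
  then obtain p where p: "p permutes {..<length \<mu>}" "permute_list p \<mu> = \<nu>"
    by (metis mset_eq_permutation)
  have X: "X_path \<nu> = X_path \<mu>" using X_path_perm[OF p(1)] p(2) by simp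
  have part: "is_partition \<nu>"
    using pos by (simp add: is_partition_def \<nu>_def sorted_wrt_rev)
  define a where "a = (\<lambda>\<eta>. if \<eta> = \<nu> then (1::rat) else 0)"
  have "{\<eta>. a \<eta> \<noteq> 0} = {\<nu>}" by (auto simp: a_def)
  then have "is_path_expansion a (X_path \<mu>)"
    using part X by (auto simp: is_path_expansion_def a_def)
  then show ?thesis by (auto simp: SP_def)
qed

lemma cntF_SP: "SP (\<lambda>\<alpha>. of_nat (cntF cs \<alpha>))"
proof (induction "card (EL True cs)" arbitrary: cs rule: less_induct)
  case less
  show ?case
  proof (cases "EL True cs = {}")
    case True
    then have lab: "\<And>j k. j < length cs \<Longrightarrow> k < length (cs!j) \<Longrightarrow> \<not> cs!j!k"
      by (auto simp: EL_def)
    have "EL False cs = Ed (sz cs)"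
      using lab by (auto simp: EL_def Ed_def)
    then have "(\<lambda>\<alpha>. of_nat (cntF cs \<alpha>)) = X_path (sz cs)"
      using True by (auto simp: cntF_def X_path_gcnt)
    moreover have "\<forall>x\<in>set (sz cs). 0 < x" by (auto simp: sz_def)
    ultimately show ?thesis using SP_X by simp
  next
    case False
    then obtain j k where j: "j < length cs" and k: "k < length (cs!j)" and lb: "cs!j!k"
      by (auto simp: EL_def)
    interpret splitloc cs j k using j k lb by unfold_locales
    have "(\<lambda>\<alpha>. of_nat (cntF cs \<alpha>) :: rat) = (\<lambda>\<alpha>. of_nat (cntF cs1 \<alpha>) - of_nat (cntF cs2 \<alpha>))"
    proof
      fix \<alpha>
      have "(of_int (int (cntF cs \<alpha>)) :: rat) = of_int (int (cntF cs1 \<alpha>) - int (cntF cs2 \<alpha>))"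
        using cnt_rec by simp
      then show "(of_nat (cntF cs \<alpha>) :: rat) = of_nat (cntF cs1 \<alpha>) - of_nat (cntF cs2 \<alpha>)" by simp
    qed
    then show ?thesis using SP_diff less card1 card2 by simp
  qed
qed



lemma finite_add_eq: "finite {(\<beta>::monomial, \<gamma>). \<beta> + \<gamma> = \<alpha>}"
proof -
  let ?B = "{\<beta>::monomial. \<exists>\<gamma>. \<beta> + \<gamma> = \<alpha>}"
  have "finite ?B"
  proof (rule inj_on_finite)
    show "inj_on (\<lambda>\<beta>. restrict (Poly_Mapping.lookup \<beta>) (Poly_Mapping.keys \<alpha>)) ?B"
    proof (rule inj_onI)
      fix x y assume x: "x \<in> ?B" and y: "y \<in> ?B"
        and e: "restrict (Poly_Mapping.lookup x) (Poly_Mapping.keys \<alpha>) = restrict (Poly_Mapping.lookup y) (Poly_Mapping.keys \<alpha>)"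
      show "x = y"
      proof (rule poly_mapping_eqI)
        fix i
        show "Poly_Mapping.lookup x i = Poly_Mapping.lookup y i"
        proof (cases "i \<in> Poly_Mapping.keys \<alpha>")
          case True then show ?thesis using fun_cong[OF e, of i] by simp
        next
          case False
          then have "Poly_Mapping.lookup \<alpha> i = 0" by (simp add: in_keys_iff)
          from x obtain gx where gx: "x + gx = \<alpha>" by auto
          from y obtain gy where gy: "y + gy = \<alpha>" by auto
          have "Poly_Mapping.lookup x i + Poly_Mapping.lookup gx i = Poly_Mapping.lookup \<alpha> i"
            "Poly_Mapping.lookup y i + Poly_Mapping.lookup gy i = Poly_Mapping.lookup \<alpha> i"
            using gx gy by (metis lookup_add)+
          then have "Poly_Mapping.lookup x i = 0" "Poly_Mapping.lookup y i = 0"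
            using \<open>Poly_Mapping.lookup \<alpha> i = 0\<close> by auto
          then show ?thesis by simp
        qed
      qed
    qed
    show "(\<lambda>\<beta>. restrict (Poly_Mapping.lookup \<beta>) (Poly_Mapping.keys \<alpha>)) ` ?B \<subseteq>
        Poly_Mapping.keys \<alpha> \<rightarrow>\<^sub>E {..Max (Poly_Mapping.lookup \<alpha> ` Poly_Mapping.keys \<alpha>)}"
    proof clarsimp
      fix \<beta> \<gamma> :: monomial and i assume "i \<in> Poly_Mapping.keys (\<beta> + \<gamma>)"
      then have "Poly_Mapping.lookup \<beta> i \<le> Poly_Mapping.lookup (\<beta> + \<gamma>) i" by (simp add: lookup_add)
      also have "\<dots> \<le> Max (Poly_Mapping.lookup (\<beta> + \<gamma>) ` Poly_Mapping.keys (\<beta> + \<gamma>))"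
        using \<open>i \<in> _\<close> by (intro Max_ge) auto
      finally show "Poly_Mapping.lookup \<beta> i \<le> Max (Poly_Mapping.lookup (\<beta> + \<gamma>) ` Poly_Mapping.keys (\<beta> + \<gamma>))" .
    qed
    show "finite (Poly_Mapping.keys \<alpha> \<rightarrow>\<^sub>E {..Max (Poly_Mapping.lookup \<alpha> ` Poly_Mapping.keys \<alpha>)})"
      by (intro finite_PiE) auto
  qed
  moreover have "{(\<beta>, \<gamma>). \<beta> + \<gamma> = \<alpha>} = (\<lambda>\<beta>. (\<beta>, \<alpha> - \<beta>)) ` ?B"
    by (auto simp: image_def)
  ultimately show ?thesis by simp
qed

lemma single_inj: "m > 0 \<Longrightarrow> Poly_Mapping.single i m = Poly_Mapping.single j (m::nat) \<longleftrightarrow> i = j"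
  by (metis lookup_single_eq lookup_single_not_eq not_gr_zero)

lemma add_single_iff:
  fixes \<alpha> \<gamma> :: monomial
  shows "Poly_Mapping.single i m + \<gamma> = \<alpha> \<longleftrightarrow> m \<le> Poly_Mapping.lookup \<alpha> i \<and> \<gamma> = \<alpha> - Poly_Mapping.single i m"
proof
  assume "Poly_Mapping.single i m + \<gamma> = \<alpha>"
  then show "m \<le> Poly_Mapping.lookup \<alpha> i \<and> \<gamma> = \<alpha> - Poly_Mapping.single i m"
    by (auto simp: lookup_add)
next
  assume a: "m \<le> Poly_Mapping.lookup \<alpha> i \<and> \<gamma> = \<alpha> - Poly_Mapping.single i m"
  show "Poly_Mapping.single i m + \<gamma> = \<alpha>"
  proof (rule poly_mapping_eqI)
    fix j show "Poly_Mapping.lookup (Poly_Mapping.single i m + \<gamma>) j = Poly_Mapping.lookup \<alpha> j"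
      using a by (cases "i = j") (auto simp: lookup_add lookup_minus lookup_single_not_eq)
  qed
qed

lemma psp_cons:
  assumes m: "m > 0"
  shows "power_sum_part (m # lam) \<alpha> =
    (\<Sum>i\<in>{i. m \<le> Poly_Mapping.lookup \<alpha> i}. power_sum_part lam (\<alpha> - Poly_Mapping.single i m))"
proof -
  let ?S = "{(\<beta>::monomial, \<gamma>). \<beta> + \<gamma> = \<alpha>}"
  let ?I = "{i. m \<le> Poly_Mapping.lookup \<alpha> i}"
  let ?h = "\<lambda>i. (Poly_Mapping.single i m, \<alpha> - Poly_Mapping.single i m)"
  have fI: "finite ?I"
    by (rule finite_subset[of _ "Poly_Mapping.keys \<alpha>"]) (use m in \<open>auto simp: in_keys_iff\<close>)
  have "power_sum_part (m # lam) \<alpha> = (\<Sum>(\<beta>, \<gamma>)\<in>?S. power_sum m \<beta> * power_sum_part lam \<gamma>)"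
    by (simp add: power_sum_part_def series_mult_def)
  also have "\<dots> = (\<Sum>(\<beta>, \<gamma>)\<in>?h ` ?I. power_sum m \<beta> * power_sum_part lam \<gamma>)"
  proof (rule sum.mono_neutral_right[OF finite_add_eq])
    show "?h ` ?I \<subseteq> ?S" using add_single_iff by auto
    show "\<forall>x\<in>?S - ?h ` ?I. (case x of (\<beta>, \<gamma>) \<Rightarrow> power_sum m \<beta> * power_sum_part lam \<gamma>) = 0"
    proof (rule ballI)
      fix x assume x: "x \<in> ?S - ?h ` ?I"
      obtain \<beta> \<gamma> where bg: "x = (\<beta>, \<gamma>)" by (cases x)
      show "(case x of (\<beta>, \<gamma>) \<Rightarrow> power_sum m \<beta> * power_sum_part lam \<gamma>) = 0"
      proof (cases "\<exists>i. \<beta> = Poly_Mapping.single i m")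
        case True
        then obtain i where i: "\<beta> = Poly_Mapping.single i m" by auto
        then have "x \<in> ?h ` ?I" using x bg add_single_iff[of i m \<gamma> \<alpha>] by auto
        then show ?thesis using x by simp
      next
        case False
        then show ?thesis using bg by (simp add: power_sum_def)
      qed
    qed
  qed
  also have "\<dots> = (\<Sum>i\<in>?I. power_sum_part lam (\<alpha> - Poly_Mapping.single i m))"
    by (subst sum.reindex) (auto simp: inj_on_def single_inj[OF m] power_sum_def)
  finally show ?thesis .
qed

definition tsum :: "nat list \<Rightarrow> nat list \<Rightarrow> monomial" where
  "tsum ys lam = sum_list (map (\<lambda>(i,m). Poly_Mapping.single i m) (zip ys lam))"

definition TS where "TS lam \<alpha> = {ys. length ys = length lam \<and> tsum ys lam = \<alpha>}"

lemma lookup_tsum: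
  "length ys = length lam \<Longrightarrow>
   Poly_Mapping.lookup (tsum ys lam) i = (\<Sum>j<length lam. if ys!j = i then lam!j else 0)"
proof (induction ys lam rule: list_induct2)
  case Nil then show ?case by (simp add: tsum_def)
next
  case (Cons y ys m lam)
  have "tsum (y#ys) (m#lam) = Poly_Mapping.single y m + tsum ys lam" by (simp add: tsum_def)
  moreover have sc: "(\<Sum>ia<length lam. if ys ! ia = i then (m # lam) ! Suc ia else 0) =
     (\<Sum>j<length lam. if ys ! j = i then lam ! j else 0)"
    by (intro sum.cong refl) (simp only: nth_Cons_Suc)
  moreover have "(\<Sum>j<length (m#lam). if (y#ys)!j = i then (m#lam)!j else 0) =
      (if y = i then m else 0) + (\<Sum>j<length lam. if ys!j = i then lam!j else 0)"
    by (simp only: length_Cons sum.lessThan_Suc_shift) (simp add: sc)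
  ultimately show ?case using Cons
    by (simp add: lookup_add lookup_single when_def)
qed

lemma set_sub_keys_tsum:
  assumes "\<forall>x\<in>set lam. 0 < x" "length ys = length lam"
  shows "set ys \<subseteq> Poly_Mapping.keys (tsum ys lam)"
proof
  fix i assume "i \<in> set ys"
  then obtain j where j: "j < length ys" "ys!j = i" by (auto simp: in_set_conv_nth)
  have "lam!j > 0" using assms j by auto
  moreover have "(if ys!j = i then lam!j else 0) \<le> (\<Sum>j<length lam. if ys!j = i then lam!j else 0)"
    by (rule member_le_sum) (use j assms(2) in auto)
  then have "lam!j \<le> (\<Sum>j<length lam. if ys!j = i then lam!j else 0)" using j by simp
  ultimately have "Poly_Mapping.lookup (tsum ys lam) i > 0"
    using lookup_tsum[OF assms(2), of i] by linarith
  then show "i \<in> Poly_Mapping.keys (tsum ys lam)" by (simp add: in_keys_iff)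
qed

lemma psp_TS:
  assumes "\<forall>x\<in>set lam. 0 < x"
  shows "power_sum_part lam \<alpha> = of_nat (card (TS lam \<alpha>))"
  using assms
proof (induction lam arbitrary: \<alpha>)
  case Nil
  have "TS [] \<alpha> = (if \<alpha> = 0 then {[]} else {})" by (auto simp: TS_def tsum_def)
  then show ?case by (simp add: power_sum_part_def series_one_def)
next
  case (Cons m lam)
  let ?I = "{i. m \<le> Poly_Mapping.lookup \<alpha> i}"
  have m: "m > 0" using Cons by simp
  have fI: "finite ?I"
    by (rule finite_subset[of _ "Poly_Mapping.keys \<alpha>"]) (use m in \<open>auto simp: in_keys_iff\<close>)
  have TSeq: "TS (m # lam) \<alpha> = (\<Union>i\<in>?I. (Cons i) ` TS lam (\<alpha> - Poly_Mapping.single i m))"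
  proof
    show "TS (m # lam) \<alpha> \<subseteq> (\<Union>i\<in>?I. (Cons i) ` TS lam (\<alpha> - Poly_Mapping.single i m))"
    proof
      fix xs assume "xs \<in> TS (m # lam) \<alpha>"
      then obtain i ys where xs: "xs = i # ys" "length ys = length lam"
        "Poly_Mapping.single i m + tsum ys lam = \<alpha>"
        by (cases xs) (auto simp: TS_def tsum_def)
      then show "xs \<in> (\<Union>i\<in>?I. (Cons i) ` TS lam (\<alpha> - Poly_Mapping.single i m))"
        using add_single_iff[of i m "tsum ys lam" \<alpha>] by (auto simp: TS_def)
    qed
    show "(\<Union>i\<in>?I. (Cons i) ` TS lam (\<alpha> - Poly_Mapping.single i m)) \<subseteq> TS (m # lam) \<alpha>"
      using add_single_iff by (auto simp: TS_def tsum_def)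
  qed
  have "card (TS (m # lam) \<alpha>) = (\<Sum>i\<in>?I. card ((Cons i) ` TS lam (\<alpha> - Poly_Mapping.single i m)))"
    unfolding TSeq
  proof (rule card_UN_disjoint[OF fI])
    show "\<forall>i\<in>?I. finite ((Cons i) ` TS lam (\<alpha> - Poly_Mapping.single i m))"
    proof
      fix i
      have "power_sum_part lam (\<alpha> - Poly_Mapping.single i m) = of_nat (card (TS lam (\<alpha> - Poly_Mapping.single i m)))"
        using Cons by simp
      show "finite ((Cons i) ` TS lam (\<alpha> - Poly_Mapping.single i m))"
      proof -
        have "TS lam \<beta> \<subseteq> {ys. set ys \<subseteq> Poly_Mapping.keys \<beta> \<and> length ys = length lam}" for \<beta>
        proof
          fix xs assume "xs \<in> TS lam \<beta>"
          then show "xs \<in> {ys. set ys \<subseteq> Poly_Mapping.keys \<beta> \<and> length ys = length lam}"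
            using set_sub_keys_tsum[of lam xs] Cons.prems by (auto simp: TS_def)
        qed
        then have "finite (TS lam (\<alpha> - Poly_Mapping.single i m))"
          by (rule finite_subset) (rule finite_lists_length_eq[OF finite_keys])
        then show ?thesis by simp
      qed
    qed
    show "\<forall>i\<in>?I. \<forall>j\<in>?I. i \<noteq> j \<longrightarrow> (Cons i) ` TS lam (\<alpha> - Poly_Mapping.single i m) \<inter> (Cons j) ` TS lam (\<alpha> - Poly_Mapping.single j m) = {}"
      by auto
  qed
  also have "\<dots> = (\<Sum>i\<in>?I. card (TS lam (\<alpha> - Poly_Mapping.single i m)))"
    by (simp add: card_image)
  finally show ?case using Cons psp_cons[OF m] by simp
qed



lemma count_mk:
  assumes "length ys = length lam"
  shows "card {v \<in> path_forest_V lam. ys ! fst v = i} = Poly_Mapping.lookup (tsum ys lam) i"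
proof -
  have "{v \<in> path_forest_V lam. ys ! fst v = i} = (\<Union>j\<in>{j\<in>{..<length lam}. ys!j = i}. {j} \<times> {..<lam!j})"
    by auto
  then have "card {v \<in> path_forest_V lam. ys ! fst v = i} = (\<Sum>j\<in>{j\<in>{..<length lam}. ys!j = i}. card ({j} \<times> {..<lam!j}))"
    by (simp only:) (rule card_UN_disjoint, auto)
  also have "\<dots> = (\<Sum>j\<in>{j\<in>{..<length lam}. ys!j = i}. lam!j)" by (simp add: card_cartesian_product)
  also have "\<dots> = (\<Sum>j<length lam. if ys!j = i then lam!j else 0)"
    by (rule sum.inter_filter) simp
  finally show ?thesis using lookup_tsum[OF assms] by simp
qed

lemma const_path:
  assumes "\<forall>(u,w)\<in>Ed lam. \<kappa> u = \<kappa> w" "j < length lam" "k < lam!j"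
  shows "\<kappa> (j,k) = \<kappa> (j,0)"
  using assms(3)
proof (induction k)
  case (Suc k)
  then have "((j,k),(j,Suc k)) \<in> Ed lam" using assms(2) by (auto simp: Ed_def)
  then show ?case using Suc assms(1) by auto
qed simp

lemma TS_gset:
  assumes pos: "\<forall>x\<in>set lam. 0 < x"
  shows "card (TS lam \<alpha>) = gcnt (path_forest_V lam) {} (Ed lam) \<alpha>"
proof -
  let ?V = "path_forest_V lam"
  define mk where "mk = (\<lambda>ys::nat list. restrict (\<lambda>v. ys ! fst v) ?V)"
  have cnt: "length ys = length lam \<Longrightarrow> counts ?V (mk ys) (tsum ys lam)" for ys
    using count_mk unfolding counts_def mk_def
    by (metis (no_types, lifting) Collect_cong restrict_apply')
  have "bij_betw mk (TS lam \<alpha>) (gset ?V {} (Ed lam) \<alpha>)"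
  proof (rule bij_betw_imageI)
    show "inj_on mk (TS lam \<alpha>)"
    proof (rule inj_onI)
      fix x y assume x: "x \<in> TS lam \<alpha>" and y: "y \<in> TS lam \<alpha>" and e: "mk x = mk y"
      show "x = y"
      proof (rule nth_equalityI)
        show "length x = length y" using x y by (simp add: TS_def)
        fix j assume "j < length x"
        then have "(j,0) \<in> ?V" using x pos by (auto simp: TS_def)
        then show "x ! j = y ! j" using fun_cong[OF e, of "(j,0)"] by (simp add: mk_def)
      qed
    qed
    show "mk ` TS lam \<alpha> = gset ?V {} (Ed lam) \<alpha>"
    proof
      show "mk ` TS lam \<alpha> \<subseteq> gset ?V {} (Ed lam) \<alpha>"
      proof
        fix \<kappa> assume "\<kappa> \<in> mk ` TS lam \<alpha>"
        then obtain ys where ys: "ys \<in> TS lam \<alpha>" "\<kappa> = mk ys" by auto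
        have "(\<forall>(u,w)\<in>Ed lam. \<kappa> u = \<kappa> w)"
          using ys by (auto simp: Ed_def mk_def)
        moreover have "counts ?V \<kappa> \<alpha>" using cnt[of ys] ys by (auto simp: TS_def)
        ultimately show "\<kappa> \<in> gset ?V {} (Ed lam) \<alpha>" using ys by (auto simp: gset_def mk_def)
      qed
      show "gset ?V {} (Ed lam) \<alpha> \<subseteq> mk ` TS lam \<alpha>"
      proof
        fix \<kappa> assume k: "\<kappa> \<in> gset ?V {} (Ed lam) \<alpha>"
        define ys where "ys = map (\<lambda>j. \<kappa> (j,0)) [0..<length lam]"
        have ly: "length ys = length lam" by (simp add: ys_def)
        have "mk ys = \<kappa>"
        proof
          fix v
          show "mk ys v = \<kappa> v"
          proof (cases "v \<in> ?V")
            case True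
            obtain j k where v: "v = (j,k)" by (cases v)
            then show ?thesis using True k const_path[of lam \<kappa> j k]
              by (auto simp: mk_def ys_def gset_def)
          next
            case False
            then show ?thesis using k by (cases v) (auto simp: mk_def gset_def PiE_def extensional_def)
          qed
        qed
        moreover have "tsum ys lam = \<alpha>"
        proof (rule poly_mapping_eqI)
          fix i
          have "Poly_Mapping.lookup (tsum ys lam) i = card {v\<in>?V. mk ys v = i}"
            using cnt[OF ly] by (simp add: counts_def)
          also have "\<dots> = Poly_Mapping.lookup \<alpha> i" using k \<open>mk ys = \<kappa>\<close> by (simp add: gset_def counts_def)
          finally show "Poly_Mapping.lookup (tsum ys lam) i = Poly_Mapping.lookup \<alpha> i" .
        qed
        ultimately show "\<kappa> \<in> mk ` TS lam \<alpha>" using ly by (auto simp: TS_def)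
      qed
    qed
  qed
  then show ?thesis unfolding gcnt_def by (rule bij_betw_same_card)
qed

definition allT :: "nat list \<Rightarrow> bool list list" where
  "allT lam = map (\<lambda>m. replicate (m - 1) True) lam"

lemma psp_cntF:
  assumes pos: "\<forall>x\<in>set lam. 0 < x"
  shows "power_sum_part lam \<alpha> = of_nat (cntF (allT lam) \<alpha>)"
proof -
  have sz: "sz (allT lam) = lam" using pos
    by (auto simp: sz_def allT_def intro!: nth_equalityI)
  have "EL False (allT lam) = {}" by (auto simp: EL_def allT_def)
  moreover have "EL True (allT lam) = Ed lam"
  proof -
    have "\<And>j. j < length lam \<Longrightarrow> lam ! j > 0" using pos by auto
    then show ?thesis by (force simp: EL_def Ed_def allT_def)
  qed
  ultimately have "cntF (allT lam) \<alpha> = gcnt (path_forest_V lam) {} (Ed lam) \<alpha>"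
    by (simp add: cntF_def sz)
  then show ?thesis using psp_TS[OF pos] TS_gset[OF pos] by simp
qed

lemma SP_psp: "\<forall>x\<in>set lam. 0 < x \<Longrightarrow> SP (power_sum_part lam)"
proof -
  assume "\<forall>x\<in>set lam. 0 < x"
  then have "power_sum_part lam = (\<lambda>\<alpha>. of_nat (cntF (allT lam) \<alpha>))" using psp_cntF by blast
  then show ?thesis using cntF_SP[of "allT lam"] by simp
qed



definition Sk :: "nat \<Rightarrow> nat \<Rightarrow> monomial set" where
  "Sk k n = {\<alpha>. Poly_Mapping.keys \<alpha> \<subseteq> {..<k} \<and> (\<Sum>i<k. Poly_Mapping.lookup \<alpha> i) = n}"

lemma finite_Sk: "finite (Sk k n)"
proof (rule inj_on_finite)
  show "inj_on (\<lambda>\<alpha>. restrict (Poly_Mapping.lookup \<alpha>) {..<k}) (Sk k n)"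
  proof (rule inj_onI)
    fix x y assume x: "x \<in> Sk k n" and y: "y \<in> Sk k n"
      and e: "restrict (Poly_Mapping.lookup x) {..<k} = restrict (Poly_Mapping.lookup y) {..<k}"
    show "x = y"
    proof (rule poly_mapping_eqI)
      fix i show "Poly_Mapping.lookup x i = Poly_Mapping.lookup y i"
      proof (cases "i < k")
        case True then show ?thesis using fun_cong[OF e, of i] by simp
      next
        case False
        then have "i \<notin> Poly_Mapping.keys x" "i \<notin> Poly_Mapping.keys y" using x y by (auto simp: Sk_def)
        then show ?thesis by (simp add: in_keys_iff)
      qed
    qed
  qed
  show "(\<lambda>\<alpha>. restrict (Poly_Mapping.lookup \<alpha>) {..<k}) ` Sk k n \<subseteq> {..<k} \<rightarrow>\<^sub>E {..n}"
  proof clarsimp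
    fix \<alpha> i assume a: "\<alpha> \<in> Sk k n" "i < k"
    have "Poly_Mapping.lookup \<alpha> i \<le> (\<Sum>i<k. Poly_Mapping.lookup \<alpha> i)"
      by (rule member_le_sum) (use a in auto)
    then show "Poly_Mapping.lookup \<alpha> i \<le> n" using a by (simp add: Sk_def)
  qed
  show "finite ({..<k} \<rightarrow>\<^sub>E {..n})" by (simp add: finite_PiE)
qed

lemma card_fibers:
  fixes k :: nat
  assumes "finite V" "\<kappa> ` V \<subseteq> {..<k}"
  shows "card V = (\<Sum>i<k. card {v\<in>V. \<kappa> v = i})"
proof -
  have "V = (\<Union>i\<in>{..<k}. {v\<in>V. \<kappa> v = i})" using assms by auto
  then have "card V = card (\<Union>i\<in>{..<k}. {v\<in>V. \<kappa> v = i})" by simp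
  also have "\<dots> = (\<Sum>i<k. card {v\<in>V. \<kappa> v = i})"
    by (rule card_UN_disjoint) (use assms in auto)
  finally show ?thesis .
qed

lemma counts_unique: "counts V \<kappa> \<alpha> \<Longrightarrow> counts V \<kappa> \<beta> \<Longrightarrow> \<alpha> = \<beta>"
  by (rule poly_mapping_eqI) (simp add: counts_def)

lemma E_lemma:
  assumes fin: "finite V"
  shows "(\<Sum>\<alpha>\<in>Sk k n. card {\<kappa>\<in>V \<rightarrow>\<^sub>E UNIV. \<Phi> \<kappa> \<and> counts V \<kappa> \<alpha>}) =
         (if card V = n then card {\<kappa>\<in>V \<rightarrow>\<^sub>E {..<k}. \<Phi> \<kappa>} else 0)"
proof -
  let ?A = "\<lambda>\<alpha>. {\<kappa>\<in>V \<rightarrow>\<^sub>E UNIV. \<Phi> \<kappa> \<and> counts V \<kappa> \<alpha>}"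
  have fA: "finite (?A \<alpha>)" for \<alpha> by (rule finite_subset[OF _ finite_counts_set[OF fin]]) auto
  have "(\<Sum>\<alpha>\<in>Sk k n. card (?A \<alpha>)) = card (\<Union>\<alpha>\<in>Sk k n. ?A \<alpha>)"
    by (rule card_UN_disjoint[symmetric]) (use finite_Sk fA in \<open>auto dest: counts_unique\<close>)
  also have "(\<Union>\<alpha>\<in>Sk k n. ?A \<alpha>) = (if card V = n then {\<kappa>\<in>V \<rightarrow>\<^sub>E {..<k}. \<Phi> \<kappa>} else {})"
  proof (intro set_eqI iffI)
    fix \<kappa> assume "\<kappa> \<in> (\<Union>\<alpha>\<in>Sk k n. ?A \<alpha>)"
    then obtain \<alpha> where a: "\<alpha> \<in> Sk k n" "\<kappa> \<in> V \<rightarrow>\<^sub>E UNIV" "\<Phi> \<kappa>" "counts V \<kappa> \<alpha>" by auto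
    have im: "\<kappa> ` V \<subseteq> {..<k}" using counts_keys[OF fin a(4)] a(1) by (auto simp: Sk_def)
    have "card V = (\<Sum>i<k. card {v\<in>V. \<kappa> v = i})" by (rule card_fibers[OF fin im])
    also have "\<dots> = n" using a(1,4) by (simp add: counts_def Sk_def)
    finally show "\<kappa> \<in> (if card V = n then {\<kappa>\<in>V \<rightarrow>\<^sub>E {..<k}. \<Phi> \<kappa>} else {})"
      using a im by (auto simp: PiE_def Pi_def)
  next
    fix \<kappa> assume k: "\<kappa> \<in> (if card V = n then {\<kappa>\<in>V \<rightarrow>\<^sub>E {..<k}. \<Phi> \<kappa>} else {})"
    then have cV: "card V = n" and kk: "\<kappa> \<in> V \<rightarrow>\<^sub>E {..<k}" "\<Phi> \<kappa>" by (auto split: if_splits)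
    define f where "f = (\<lambda>i. card {v\<in>V. \<kappa> v = i})"
    have ff: "finite {i. f i \<noteq> 0}"
      by (rule finite_subset[of _ "\<kappa> ` V"]) (use fin in \<open>auto simp: f_def card_eq_0_iff\<close>)
    define \<alpha> where "\<alpha> = Abs_poly_mapping f"
    have la: "Poly_Mapping.lookup \<alpha> = f" using ff by (simp add: \<alpha>_def)
    have im: "\<kappa> ` V \<subseteq> {..<k}" using kk by (auto simp: PiE_def Pi_def)
    have "\<alpha> \<in> Sk k n"
    proof -
      have "Poly_Mapping.keys \<alpha> \<subseteq> {..<k}"
      proof
        fix i assume "i \<in> Poly_Mapping.keys \<alpha>"
        then have "f i \<noteq> 0" using la by (simp add: in_keys_iff)
        then obtain v where "v \<in> V" "\<kappa> v = i" by (auto simp: f_def card_eq_0_iff)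
        then show "i \<in> {..<k}" using im by auto
      qed
      moreover have "(\<Sum>i<k. Poly_Mapping.lookup \<alpha> i) = n"
        using card_fibers[OF fin im] cV by (simp add: la f_def)
      ultimately show ?thesis by (simp add: Sk_def)
    qed
    moreover have "counts V \<kappa> \<alpha>" by (simp add: counts_def la f_def)
    ultimately show "\<kappa> \<in> (\<Union>\<alpha>\<in>Sk k n. ?A \<alpha>)" using kk by (auto simp: PiE_def Pi_def)
  qed
  finally show ?thesis by simp
qed



definition PC :: "nat \<Rightarrow> nat list \<Rightarrow> (nat\<times>nat \<Rightarrow> nat) set" where
  "PC k lam = {\<kappa> \<in> path_forest_V lam \<rightarrow>\<^sub>E {..<k}. \<forall>(u,w)\<in>Ed lam. \<kappa> u \<noteq> \<kappa> w}"

definition gk :: "nat \<Rightarrow> nat \<Rightarrow> nat" where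
  "gk k m = (if m = 0 then 1 else k * (k - 1) ^ (m - 1))"

lemma gk_Suc: "gk k (Suc m) = gk k m * (if m = 0 then k else k - 1)"
  by (cases m) (auto simp: gk_def)

lemma Ed_iff: "((a,b),(c,d)) \<in> Ed l \<longleftrightarrow> c = a \<and> d = Suc b \<and> a < length l \<and> Suc b < l!a"
  by (auto simp: Ed_def)

lemma finite_PC: "finite (PC k lam)"
  unfolding PC_def by (rule finite_subset[OF _ finite_PiE[of "path_forest_V lam" "\<lambda>_. {..<k}"]]) auto

lemma PC_step:
  assumes j: "j < length lam" and m: "lam ! j = Suc m"
  shows "card (PC k lam) = card (PC k (lam[j := m])) * (if m = 0 then k else k - 1)"
proof -
  let ?l = "lam[j := m]"
  let ?V = "path_forest_V ?l"
  let ?v = "(j, m)"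
  define C where "C = (\<lambda>\<kappa>::nat\<times>nat\<Rightarrow>nat. {c. c < k \<and> (m > 0 \<longrightarrow> c \<noteq> \<kappa> (j, m - 1))})"
  have Vi: "path_forest_V lam = insert ?v ?V" using j m
    by (auto simp: path_forest_V_def nth_list_update less_Suc_eq split: if_splits)
  have vn: "?v \<notin> ?V" using j by simp
  have Ei: "Ed lam = Ed ?l \<union> (if m > 0 then {((j, m - 1), ?v)} else {})"
  proof (intro set_eqI)
    fix x :: "(nat\<times>nat)\<times>(nat\<times>nat)"
    obtain a b c d where x: "x = ((a,b),(c,d))" by (metis prod.collapse)
    show "x \<in> Ed lam \<longleftrightarrow> x \<in> Ed ?l \<union> (if m > 0 then {((j, m - 1), ?v)} else {})"
      using j m unfolding x by (cases "a = j") (auto simp: Ed_iff)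
  qed
  have EV: "\<And>u w. (u,w) \<in> Ed ?l \<Longrightarrow> u \<in> ?V \<and> w \<in> ?V" by (auto simp: Ed_def)
  have "PC k lam = (\<lambda>(\<kappa>, c). \<kappa>(?v := c)) ` (SIGMA \<kappa>:PC k ?l. C \<kappa>)"
  proof
    show "PC k lam \<subseteq> (\<lambda>(\<kappa>, c). \<kappa>(?v := c)) ` (SIGMA \<kappa>:PC k ?l. C \<kappa>)"
    proof
      fix \<kappa> assume k: "\<kappa> \<in> PC k lam"
      have kP: "\<kappa> \<in> insert ?v ?V \<rightarrow>\<^sub>E {..<k}" using k Vi by (simp add: PC_def)
      have kE: "\<forall>(u,w)\<in>Ed lam. \<kappa> u \<noteq> \<kappa> w" using k by (simp add: PC_def)
      define \<kappa>' where "\<kappa>' = \<kappa>(?v := undefined)"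
      have "\<kappa>' \<in> PC k ?l"
      proof -
        have "\<kappa>' \<in> ?V \<rightarrow>\<^sub>E {..<k}" unfolding \<kappa>'_def by (rule fun_upd_in_PiE[OF vn kP])
        moreover have "\<forall>(u,w)\<in>Ed ?l. \<kappa>' u \<noteq> \<kappa>' w"
        proof clarify
          fix u w assume uw: "(u,w) \<in> Ed ?l" "\<kappa>' u = \<kappa>' w"
          then have "(u,w) \<in> Ed lam" using Ei by auto
          moreover have "u \<noteq> ?v" "w \<noteq> ?v" using EV[OF uw(1)] vn by auto
          ultimately show False using uw(2) kE by (auto simp: \<kappa>'_def)
        qed
        ultimately show ?thesis by (simp add: PC_def)
      qed
      moreover have "\<kappa> ?v \<in> C \<kappa>'"
      proof -
        have "\<kappa> ?v < k" using PiE_mem[OF kP, of ?v] by simp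
        moreover have "m > 0 \<longrightarrow> \<kappa> ?v \<noteq> \<kappa>' (j, m - 1)"
        proof
          assume "m > 0"
          then have "((j, m - 1), ?v) \<in> Ed lam" "(j, m-1) \<noteq> ?v" using Ei by auto
          then show "\<kappa> ?v \<noteq> \<kappa>' (j, m - 1)" using kE by (auto simp: \<kappa>'_def)
        qed
        ultimately show ?thesis by (simp add: C_def)
      qed
      moreover have "\<kappa> = \<kappa>'(?v := \<kappa> ?v)" by (simp add: \<kappa>'_def)
      ultimately show "\<kappa> \<in> (\<lambda>(\<kappa>, c). \<kappa>(?v := c)) ` (SIGMA \<kappa>:PC k ?l. C \<kappa>)"
        by (intro image_eqI[where x="(\<kappa>', \<kappa> ?v)"]) auto
    qed
    show "(\<lambda>(\<kappa>, c). \<kappa>(?v := c)) ` (SIGMA \<kappa>:PC k ?l. C \<kappa>) \<subseteq> PC k lam"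
    proof clarify
      fix \<kappa> c assume k: "\<kappa> \<in> PC k ?l" and c: "c \<in> C \<kappa>"
      have "\<kappa>(?v := c) \<in> insert ?v ?V \<rightarrow>\<^sub>E {..<k}"
        by (rule PiE_fun_upd) (use k c in \<open>auto simp: PC_def C_def\<close>)
      then have "\<kappa>(?v := c) \<in> path_forest_V lam \<rightarrow>\<^sub>E {..<k}" using Vi by simp
      moreover have "\<forall>(u,w)\<in>Ed lam. (\<kappa>(?v := c)) u \<noteq> (\<kappa>(?v := c)) w"
      proof clarify
        fix u w assume uw: "(u,w) \<in> Ed lam" "(\<kappa>(?v := c)) u = (\<kappa>(?v := c)) w"
        show False
        proof (cases "(u,w) \<in> Ed ?l")
          case True
          then have "u \<noteq> ?v" "w \<noteq> ?v" using EV vn by blast+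
          then show False using uw True k by (auto simp: PC_def)
        next
          case False
          then have "m > 0" "u = (j, m - 1)" "w = ?v" using uw Ei by (auto split: if_splits)
          then have "(\<kappa>(?v := c)) u = \<kappa> (j, m - 1)" "(\<kappa>(?v := c)) w = c" by auto
          moreover have "c \<noteq> \<kappa> (j, m - 1)" using c \<open>m > 0\<close> by (simp add: C_def)
          ultimately show False using uw(2) by simp
        qed
      qed
      ultimately show "\<kappa>(?v := c) \<in> PC k lam" by (simp add: PC_def)
    qed
  qed
  moreover have "inj_on (\<lambda>(\<kappa>, c). \<kappa>(?v := c)) (SIGMA \<kappa>:PC k ?l. C \<kappa>)"
  proof (rule inj_onI)
    fix p1 p2 assume p1: "p1 \<in> (SIGMA \<kappa>:PC k ?l. C \<kappa>)" and p2: "p2 \<in> (SIGMA \<kappa>:PC k ?l. C \<kappa>)"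
      and e: "(\<lambda>(\<kappa>, c). \<kappa>(?v := c)) p1 = (\<lambda>(\<kappa>, c). \<kappa>(?v := c)) p2"
    obtain \<kappa>1 c1 where q1: "p1 = (\<kappa>1, c1)" by (cases p1)
    obtain \<kappa>2 c2 where q2: "p2 = (\<kappa>2, c2)" by (cases p2)
    have a: "\<kappa>1 \<in> PC k ?l" "\<kappa>2 \<in> PC k ?l" using p1 p2 q1 q2 by auto
    have e': "\<kappa>1(?v := c1) = \<kappa>2(?v := c2)" using e q1 q2 by simp
    have "c1 = c2" using fun_cong[OF e', of ?v] by simp
    moreover have "\<kappa>1 = \<kappa>2"
    proof
      fix x show "\<kappa>1 x = \<kappa>2 x"
      proof (cases "x = ?v")
        case True
        then have xn: "x \<notin> ?V" using vn by simp
        have e1: "\<kappa>1 \<in> extensional ?V" and e2: "\<kappa>2 \<in> extensional ?V" using a by (simp_all add: PC_def PiE_def)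
        show ?thesis unfolding extensional_arb[OF e1 xn] extensional_arb[OF e2 xn] ..
      next
        case False then show ?thesis using fun_cong[OF e', of x] by simp
      qed
    qed
    ultimately show "p1 = p2" using q1 q2 by simp
  qed
  ultimately have "card (PC k lam) = card (SIGMA \<kappa>:PC k ?l. C \<kappa>)" by (simp add: card_image)
  also have "\<dots> = (\<Sum>\<kappa>\<in>PC k ?l. card (C \<kappa>))"
    by (rule card_SigmaI) (auto simp: finite_PC C_def)
  also have "\<dots> = (\<Sum>\<kappa>\<in>PC k ?l. (if m = 0 then k else k - 1))"
  proof (rule sum.cong[OF refl])
    fix \<kappa> assume k: "\<kappa> \<in> PC k ?l"
    show "card (C \<kappa>) = (if m = 0 then k else k - 1)"
    proof (cases "m = 0")
      case True then show ?thesis by (simp add: C_def)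
    next
      case False
      then have "(j, m - 1) \<in> ?V" using j by simp
      then have "\<kappa> (j, m-1) < k" using k by (auto simp: PC_def PiE_def Pi_def)
      moreover have "C \<kappa> = {..<k} - {\<kappa> (j, m-1)}" using False by (auto simp: C_def)
      ultimately show ?thesis using False by simp
    qed
  qed
  finally show ?thesis by simp
qed

lemma card_PC: "card (PC k lam) = (\<Prod>j<length lam. gk k (lam ! j))"
proof (induction "sum_list lam" arbitrary: lam rule: less_induct)
  case less
  show ?case
  proof (cases "\<exists>j<length lam. lam ! j \<noteq> 0")
    case False
    then have "path_forest_V lam = {}" "Ed lam = {}" by (auto simp: Ed_def)
    then have "PC k lam = {\<lambda>x. undefined}" by (simp add: PC_def)
    then show ?thesis using False by (simp add: gk_def)
  next
    case True
    then obtain j m where j: "j < length lam" and m: "lam ! j = Suc m" by (metis not0_implies_Suc)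
    let ?l = "lam[j := m]"
    have "lam ! j \<le> sum_list lam" using j by (simp add: elem_le_sum_list)
    then have "sum_list ?l < sum_list lam" using j m by (simp add: sum_list_update)
    then have IH: "card (PC k ?l) = (\<Prod>i<length ?l. gk k (?l ! i))" using less by blast
    have "(\<Prod>i<length lam. gk k (lam ! i)) = gk k (lam!j) * (\<Prod>i\<in>{..<length lam} - {j}. gk k (lam ! i))"
      using j by (simp add: prod.remove)
    moreover have "(\<Prod>i<length ?l. gk k (?l ! i)) = gk k m * (\<Prod>i\<in>{..<length lam} - {j}. gk k (lam ! i))"
      using j by (simp add: prod.remove)
    ultimately show ?thesis using PC_step[OF j m, of k] IH m by (simp add: gk_Suc)
  qed
qed

lemma prod_gk:
  assumes "\<forall>x\<in>set lam. 0 < x"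
  shows "(\<Prod>j<length lam. gk k (lam ! j)) = k ^ length lam * (k - 1) ^ (sum_list lam - length lam)"
  using assms
proof (induction lam)
  case (Cons a lam)
  have "(\<Prod>j<length (a#lam). gk k ((a#lam) ! j)) = gk k a * (\<Prod>j<length lam. gk k (lam ! j))"
    by (simp only: length_Cons prod.lessThan_Suc_shift) simp
  moreover have "sum_list lam \<ge> length lam" using Cons.prems
    by (induction lam) (auto simp: Suc_le_eq)
  ultimately show ?case using Cons by (simp add: gk_def power_add[symmetric])
qed simp



lemma sum_X_path:
  assumes pos: "\<forall>x\<in>set \<mu>. 0 < x"
  shows "(\<Sum>\<alpha>\<in>Sk k n. X_path \<mu> \<alpha>) =
    (if sum_list \<mu> = n then of_nat (k ^ length \<mu> * (k - 1) ^ (sum_list \<mu> - length \<mu>)) else 0)"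
proof -
  let ?V = "path_forest_V \<mu>"
  let ?\<Phi> = "\<lambda>\<kappa>. \<forall>(u,w)\<in>Ed \<mu>. \<kappa> u \<noteq> \<kappa> w"
  have "gset ?V (Ed \<mu>) {} \<alpha> = {\<kappa>\<in>?V \<rightarrow>\<^sub>E UNIV. ?\<Phi> \<kappa> \<and> counts ?V \<kappa> \<alpha>}" for \<alpha>
    by (auto simp: gset_def)
  then have "(\<Sum>\<alpha>\<in>Sk k n. X_path \<mu> \<alpha>) = of_nat (\<Sum>\<alpha>\<in>Sk k n. card {\<kappa>\<in>?V \<rightarrow>\<^sub>E UNIV. ?\<Phi> \<kappa> \<and> counts ?V \<kappa> \<alpha>})"
    by (simp add: X_path_gcnt gcnt_def)
  also have "\<dots> = of_nat (if card ?V = n then card {\<kappa>\<in>?V \<rightarrow>\<^sub>E {..<k}. ?\<Phi> \<kappa>} else 0)"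
    by (subst E_lemma) simp_all
  also have "\<dots> = (if sum_list \<mu> = n then of_nat (k ^ length \<mu> * (k - 1) ^ (sum_list \<mu> - length \<mu>)) else 0)"
    using card_PC[of k \<mu>] prod_gk[OF pos, of k] by (simp add: card_pfV PC_def)
  finally show ?thesis .
qed

lemma card_const:
  assumes pos: "\<forall>x\<in>set lam. 0 < x"
  shows "card {\<kappa>\<in>path_forest_V lam \<rightarrow>\<^sub>E {..<k}. \<forall>(u,w)\<in>Ed lam. \<kappa> u = \<kappa> w} = k ^ length lam"
proof -
  let ?V = "path_forest_V lam"
  let ?L = "{ys. set ys \<subseteq> {..<k} \<and> length ys = length lam}"
  define mk where "mk = (\<lambda>ys::nat list. restrict (\<lambda>v. ys ! fst v) ?V)"
  have "bij_betw mk ?L {\<kappa>\<in>?V \<rightarrow>\<^sub>E {..<k}. \<forall>(u,w)\<in>Ed lam. \<kappa> u = \<kappa> w}"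
  proof (rule bij_betw_imageI)
    show "inj_on mk ?L"
    proof (rule inj_onI)
      fix x y assume x: "x \<in> ?L" and y: "y \<in> ?L" and e: "mk x = mk y"
      show "x = y"
      proof (rule nth_equalityI)
        show "length x = length y" using x y by simp
        fix j assume "j < length x"
        then have "(j,0) \<in> ?V" using x pos by auto
        then show "x ! j = y ! j" using fun_cong[OF e, of "(j,0)"] by (simp add: mk_def)
      qed
    qed
    show "mk ` ?L = {\<kappa>\<in>?V \<rightarrow>\<^sub>E {..<k}. \<forall>(u,w)\<in>Ed lam. \<kappa> u = \<kappa> w}"
    proof
      show "mk ` ?L \<subseteq> {\<kappa>\<in>?V \<rightarrow>\<^sub>E {..<k}. \<forall>(u,w)\<in>Ed lam. \<kappa> u = \<kappa> w}"
      proof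
        fix \<kappa> assume "\<kappa> \<in> mk ` ?L"
        then obtain ys where ys: "ys \<in> ?L" "\<kappa> = mk ys" by auto
        have "\<forall>(u,w)\<in>Ed lam. \<kappa> u = \<kappa> w" using ys by (auto simp: Ed_def mk_def)
        moreover have "\<kappa> \<in> ?V \<rightarrow>\<^sub>E {..<k}"
        proof -
          have yk: "ys ! a < k" if "a < length lam" for a
          proof -
            have "ys ! a \<in> set ys" using that ys(1) by (intro nth_mem) simp
            then show ?thesis using ys(1) by auto
          qed
          show ?thesis using yk by (auto simp: ys(2) mk_def PiE_def Pi_def)
        qed
        ultimately show "\<kappa> \<in> {\<kappa>\<in>?V \<rightarrow>\<^sub>E {..<k}. \<forall>(u,w)\<in>Ed lam. \<kappa> u = \<kappa> w}" by simp
      qed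
      show "{\<kappa>\<in>?V \<rightarrow>\<^sub>E {..<k}. \<forall>(u,w)\<in>Ed lam. \<kappa> u = \<kappa> w} \<subseteq> mk ` ?L"
      proof
        fix \<kappa> assume k: "\<kappa> \<in> {\<kappa>\<in>?V \<rightarrow>\<^sub>E {..<k}. \<forall>(u,w)\<in>Ed lam. \<kappa> u = \<kappa> w}"
        define ys where "ys = map (\<lambda>j. \<kappa> (j,0)) [0..<length lam]"
        have "mk ys = \<kappa>"
        proof
          fix v
          show "mk ys v = \<kappa> v"
          proof (cases "v \<in> ?V")
            case True
            obtain j i where v: "v = (j,i)" by (cases v)
            then show ?thesis using True k const_path[of lam \<kappa> j i]
              by (auto simp: mk_def ys_def)
          next
            case False
            moreover have "\<kappa> \<in> extensional ?V" using k by (simp add: PiE_def)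
            ultimately have "\<kappa> v = undefined" by (intro extensional_arb)
            then show ?thesis using False by (simp add: mk_def)
          qed
        qed
        moreover have "ys \<in> ?L"
        proof -
          have "\<kappa> (j,0) < k" if "j < length lam" for j
          proof -
            have "(j,0) \<in> ?V" using that pos by auto
            then show ?thesis using k by (auto simp: PiE_def Pi_def)
          qed
          then show ?thesis by (auto simp: ys_def)
        qed
        ultimately show "\<kappa> \<in> mk ` ?L" by blast
      qed
    qed
  qed
  then have "card ?L = card {\<kappa>\<in>?V \<rightarrow>\<^sub>E {..<k}. \<forall>(u,w)\<in>Ed lam. \<kappa> u = \<kappa> w}"
    by (rule bij_betw_same_card)
  then show ?thesis by (simp add: card_lists_length_eq)
qed

lemma sum_psp:
  assumes pos: "\<forall>x\<in>set lam. 0 < x"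
  shows "(\<Sum>\<alpha>\<in>Sk k n. power_sum_part lam \<alpha>) = (if sum_list lam = n then of_nat (k ^ length lam) else 0)"
proof -
  let ?V = "path_forest_V lam"
  let ?\<Phi> = "\<lambda>\<kappa>. \<forall>(u,w)\<in>Ed lam. \<kappa> u = \<kappa> w"
  have "gset ?V {} (Ed lam) \<alpha> = {\<kappa>\<in>?V \<rightarrow>\<^sub>E UNIV. ?\<Phi> \<kappa> \<and> counts ?V \<kappa> \<alpha>}" for \<alpha>
    by (auto simp: gset_def)
  then have "(\<Sum>\<alpha>\<in>Sk k n. power_sum_part lam \<alpha>) = of_nat (\<Sum>\<alpha>\<in>Sk k n. card {\<kappa>\<in>?V \<rightarrow>\<^sub>E UNIV. ?\<Phi> \<kappa> \<and> counts ?V \<kappa> \<alpha>})"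
    using psp_TS[OF pos] TS_gset[OF pos] by (simp add: gcnt_def)
  also have "\<dots> = of_nat (if card ?V = n then card {\<kappa>\<in>?V \<rightarrow>\<^sub>E {..<k}. ?\<Phi> \<kappa>} else 0)"
    by (subst E_lemma) simp_all
  also have "\<dots> = (if sum_list lam = n then of_nat (k ^ length lam) else 0)"
    using card_const[OF pos, of k] by (simp add: card_pfV)
  finally show ?thesis .
qed



lemma len_le_sum: "\<forall>x\<in>set \<mu>. 0 < x \<Longrightarrow> length \<mu> \<le> sum_list \<mu>"
  by (induction \<mu>) (auto simp: Suc_le_eq)

lemma key_identity:
  assumes pos: "\<forall>x\<in>set lam. 0 < x" and a: "is_path_expansion a (power_sum_part lam)"
  shows "(\<Sum>\<mu>\<in>{\<mu>. a \<mu> \<noteq> 0 \<and> sum_list \<mu> = n}. a \<mu> * of_nat (k ^ length \<mu> * (k - 1) ^ (n - length \<mu>)))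
       = (if sum_list lam = n then of_nat (k ^ length lam) else 0)"
proof -
  let ?M = "{\<mu>. a \<mu> \<noteq> 0}"
  have fM: "finite ?M" and parts: "\<And>\<mu>. \<mu> \<in> ?M \<Longrightarrow> \<forall>x\<in>set \<mu>. 0 < x"
    and ex: "\<And>\<alpha>. power_sum_part lam \<alpha> = (\<Sum>\<mu>\<in>?M. a \<mu> * X_path \<mu> \<alpha>)"
    using a by (auto simp: is_path_expansion_def is_partition_def)
  have "(if sum_list lam = n then of_nat (k ^ length lam) else 0) = (\<Sum>\<alpha>\<in>Sk k n. power_sum_part lam \<alpha>)"
    using sum_psp[OF pos] by simp
  also have "\<dots> = (\<Sum>\<alpha>\<in>Sk k n. \<Sum>\<mu>\<in>?M. a \<mu> * X_path \<mu> \<alpha>)" using ex by simp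
  also have "\<dots> = (\<Sum>\<mu>\<in>?M. a \<mu> * (\<Sum>\<alpha>\<in>Sk k n. X_path \<mu> \<alpha>))"
    by (subst sum.swap) (simp add: sum_distrib_left)
  also have "\<dots> = (\<Sum>\<mu>\<in>?M. if sum_list \<mu> = n then a \<mu> * of_nat (k ^ length \<mu> * (k - 1) ^ (n - length \<mu>)) else 0)"
    by (rule sum.cong[OF refl]) (simp add: sum_X_path[OF parts])
  also have "\<dots> = (\<Sum>\<mu>\<in>{\<mu>\<in>?M. sum_list \<mu> = n}. a \<mu> * of_nat (k ^ length \<mu> * (k - 1) ^ (n - length \<mu>)))"
    by (rule sum.inter_filter[symmetric, OF fM])
  finally show ?thesis by simp
qed

lemma Q_eq:
  assumes pos: "\<forall>x\<in>set lam. 0 < x" and a: "is_path_expansion a (power_sum_part lam)"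
  shows "(\<Sum>\<mu>\<in>{\<mu>. a \<mu> \<noteq> 0 \<and> sum_list \<mu> = n}. monom (a \<mu>) (length \<mu>)) =
    (if n = sum_list lam then monom 1 (length lam) * [:-1, 1:] ^ (sum_list lam - length lam) else 0)"
  (is "?Q = ?R")
proof -
  let ?Mn = "{\<mu>. a \<mu> \<noteq> 0 \<and> sum_list \<mu> = n}"
  let ?S = "sum_list lam" and ?L = "length lam"
  let ?T = "monom (1::rat) ?L * [:-1, 1:] ^ (?S - ?L)"
  have parts: "\<And>\<mu>. \<mu> \<in> ?Mn \<Longrightarrow> \<forall>x\<in>set \<mu>. 0 < x"
    using a by (auto simp: is_path_expansion_def is_partition_def)
  have LS: "?L \<le> ?S" by (rule len_le_sum[OF pos])
  define P where "P = ?Q - ?R"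
  have root: "poly P (of_nat k / (of_nat k - 1)) = 0" if k2: "k \<ge> 2" for k :: nat
  proof -
    define d :: rat where "d = of_nat k - 1"
    define x :: rat where "x = of_nat k / d"
    have d0: "d \<noteq> 0" using k2 by (simp add: d_def)
    have xd: "x * d = of_nat k" using d0 by (simp add: x_def)
    have x1d: "(x - 1) * d = 1" using d0 by (simp add: x_def d_def field_simps)
    have dk: "(of_nat (k - 1) :: rat) = d" using k2 by (simp add: d_def of_nat_diff)
    have "poly ?Q x * d ^ n = (\<Sum>\<mu>\<in>?Mn. a \<mu> * x ^ length \<mu> * d ^ n)"
      by (simp add: poly_sum poly_monom sum_distrib_right)
    also have "\<dots> = (\<Sum>\<mu>\<in>?Mn. a \<mu> * of_nat (k ^ length \<mu> * (k - 1) ^ (n - length \<mu>)))"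
    proof (rule sum.cong[OF refl])
      fix \<mu> assume m: "\<mu> \<in> ?Mn"
      have le: "length \<mu> \<le> n" using len_le_sum[OF parts[OF m]] m by simp
      have "x ^ length \<mu> * d ^ n = x ^ length \<mu> * (d ^ length \<mu> * d ^ (n - length \<mu>))"
        using le by (simp add: power_add[symmetric])
      also have "\<dots> = (x * d) ^ length \<mu> * d ^ (n - length \<mu>)" by (simp add: power_mult_distrib)
      finally show "a \<mu> * x ^ length \<mu> * d ^ n = a \<mu> * of_nat (k ^ length \<mu> * (k - 1) ^ (n - length \<mu>))"
        using xd dk by (simp add: mult.assoc)
    qed
    also have "\<dots> = (if ?S = n then of_nat (k ^ ?L) else 0)" by (rule key_identity[OF pos a])
    finally have Qv: "poly ?Q x * d ^ n = (if ?S = n then of_nat (k ^ ?L) else 0)" .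
    have "poly ?R x * d ^ n = (if ?S = n then of_nat (k ^ ?L) else 0)"
    proof (cases "n = ?S")
      case True
      have "poly ?T x * d ^ ?S = x ^ ?L * (x - 1) ^ (?S - ?L) * (d ^ ?L * d ^ (?S - ?L))"
        using LS by (simp add: poly_monom power_add[symmetric])
      also have "\<dots> = (x * d) ^ ?L * ((x - 1) * d) ^ (?S - ?L)" by (simp add: power_mult_distrib)
      also have "\<dots> = of_nat (k ^ ?L)" using xd x1d by simp
      finally show ?thesis using True by simp
    qed simp
    then have "poly P x * d ^ n = 0" using Qv by (simp add: P_def algebra_simps)
    then show ?thesis using d0 by (simp add: x_def d_def)
  qed
  have "P = 0"
  proof (rule ccontr)
    assume "P \<noteq> 0"
    then have fin: "finite {x. poly P x = 0}" by (rule poly_roots_finite)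
    have "(\<lambda>k::nat. (of_nat k / (of_nat k - 1) :: rat)) ` {2..} \<subseteq> {x. poly P x = 0}"
      using root by auto
    moreover have inj: "inj_on (\<lambda>k::nat. (of_nat k / (of_nat k - 1) :: rat)) {2..}"
    proof -
      show "inj_on (\<lambda>k::nat. (of_nat k / (of_nat k - 1) :: rat)) {2..}"
      proof (rule inj_onI)
        fix k k' :: nat assume k: "k \<in> {2..}" and k': "k' \<in> {2..}"
          and e: "(of_nat k / (of_nat k - 1) :: rat) = of_nat k' / (of_nat k' - 1)"
        have "(of_nat k - 1 :: rat) \<noteq> 0" "(of_nat k' - 1 :: rat) \<noteq> 0" using k k' by auto
        then have "(of_nat k :: rat) * (of_nat k' - 1) = of_nat k' * (of_nat k - 1)"
          using e by (simp add: field_simps)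
        then have "(of_nat k :: rat) = of_nat k'" by (simp add: algebra_simps)
        then show "k = k'" by simp
      qed
    qed
    ultimately have "finite ((\<lambda>k::nat. (of_nat k / (of_nat k - 1) :: rat)) ` {2..})"
      using fin finite_subset by blast
    then have "finite {2::nat..}" using finite_imageD inj by blast
    then show False using infinite_Ici[of "2::nat"] by blast
  qed
  then show ?thesis by (simp add: P_def)
qed

lemma tau_unique:
  assumes pos: "\<forall>x\<in>set lam. 0 < x" and a: "is_path_expansion a (power_sum_part lam)"
  shows "tau a = monom 1 (length lam) * [:-1, 1:] ^ (sum_list lam - length lam)"
proof -
  let ?M = "{\<mu>. a \<mu> \<noteq> 0}"
  let ?T = "monom (1::rat) (length lam) * [:-1, 1:] ^ (sum_list lam - length lam)"
  let ?N = "insert (sum_list lam) (sum_list ` ?M)"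
  have fM: "finite ?M" using a by (simp add: is_path_expansion_def)
  have "tau a = (\<Sum>\<mu>\<in>?M. monom (a \<mu>) (length \<mu>))" by (simp add: tau_def)
  also have "\<dots> = (\<Sum>n\<in>?N. \<Sum>\<mu>\<in>{\<mu>. \<mu> \<in> ?M \<and> sum_list \<mu> = n}. monom (a \<mu>) (length \<mu>))"
    by (rule sum.group[symmetric]) (use fM in auto)
  also have "\<dots> = (\<Sum>n\<in>?N. if n = sum_list lam then ?T else 0)"
    by (rule sum.cong[OF refl]) (use Q_eq[OF pos a] in simp)
  also have "\<dots> = ?T" using fM by simp
  finally show ?thesis .
qed

theorem proposition4p2:
  fixes lam :: "nat list"
  assumes "is_partition lam"
  shows "(\<exists>a. is_path_expansion a (power_sum_part lam)) \<and>
         (\<forall>a. is_path_expansion a (power_sum_part lam) \<longrightarrow>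
              tau a = monom 1 (length lam) * [:-1, 1:] ^ (sum_list lam - length lam))"
proof -
  have pos: "\<forall>x\<in>set lam. 0 < x" using assms by (simp add: is_partition_def)
  show ?thesis using SP_psp[OF pos] tau_unique[OF pos] by (simp add: SP_def)
qed


end
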